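(* Let $q$ be a prime power with $q\equiv 1 \pmod 3$, let $\delta\in\mathbb{F}_q$ be a cubic nonresidue, and let $\mathbb{F}_q(\delta^{1/3})$ be the cubic extension with $\mathbb{F}_q$-basis $\{1,\delta^{1/3},\delta^{2/3}\}$; write $\alpha=\alpha_1+\alpha_2\delta^{1/3}+\alpha_3\delta^{2/3}$ with $\alpha_i\in\mathbb{F}_q$. Let $\mathbb{H}_q=\{(\alpha,\beta)\in \mathbb{F}_q(\delta^{1/3})^2 : \alpha_2\beta_3-\alpha_3\beta_2\neq 0\}$ with the action of $\mathrm{GL}_3(\mathbb{F}_q)$ given by \[ \begin{bmatrix} a & b & c\\ d & e & f\\ r & s & t \end{bmatrix} (\alpha,\beta) = \left(\frac{a\alpha+b\beta+c}{r\alpha+s\beta+t}, \frac{d\alpha+e\beta+f}{r\alpha+s\beta+t} \right). \] Let $B\le\mathrm{GL}_3(\mathbb{F}_q)$ be the Borel subgroup of invertible upper-triangular matrices. Then \[\{(\delta^{1/3},\,v\delta^{1/3}+\delta^{2/3}) : v\in\mathbb{F}_q\}\ \sqcup\ \{(\delta^{2/3},\,\delta^{1/3})\}\] is a fundamental domain for the action of $B$ on $\mathbb{H}_q$.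
   Context: A fundamental domain for the action of a subgroup $H$ on $\mathbb{H}_q$ is a subset of $\mathbb{H}_q$ containing exactly one element of each $H$-orbit. A cubic nonresidue is an element of $\mathbb{F}_q^\times$ that is not a cube in $\mathbb{F}_q$. *)

theory Defs
  imports "HOL-Analysis.Analysis"
begin

text \<open>Elements of the cubic extension F_q(delta^(1/3)) are represented by their
coordinates (x1, x2, x3) with respect to the F_q-basis 1, delta^(1/3), delta^(2/3).\<close>

type_synonym 'a cubext = "'a \<times> 'a \<times> 'a"

definition cubic_nonresidue :: "'a::field \<Rightarrow> bool" where
  "cubic_nonresidue d \<longleftrightarrow> d \<noteq> 0 \<and> \<not> (\<exists>x. x ^ 3 = d)"

definition cconst :: "'a::field \<Rightarrow> 'a cubext" where
  "cconst c = (c, 0, 0)"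

definition cadd :: "'a::field cubext \<Rightarrow> 'a cubext \<Rightarrow> 'a cubext" where
  "cadd x y = (case x of (x1, x2, x3) \<Rightarrow> case y of (y1, y2, y3) \<Rightarrow>
     (x1 + y1, x2 + y2, x3 + y3))"

definition csmul :: "'a::field \<Rightarrow> 'a cubext \<Rightarrow> 'a cubext" where
  "csmul c x = (case x of (x1, x2, x3) \<Rightarrow> (c * x1, c * x2, c * x3))"

text \<open>Multiplication in F_q(theta), theta^3 = delta.\<close>
definition cmul :: "'a::field \<Rightarrow> 'a cubext \<Rightarrow> 'a cubext \<Rightarrow> 'a cubext" where
  "cmul d x y = (case x of (x1, x2, x3) \<Rightarrow> case y of (y1, y2, y3) \<Rightarrow>
     (x1 * y1 + d * (x2 * y3 + x3 * y2),
      x1 * y2 + x2 * y1 + d * (x3 * y3),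
      x1 * y3 + x2 * y2 + x3 * y1))"

definition cinv :: "'a::field \<Rightarrow> 'a cubext \<Rightarrow> 'a cubext" where
  "cinv d y = (THE z. cmul d y z = cconst 1)"

definition cdiv :: "'a::field \<Rightarrow> 'a cubext \<Rightarrow> 'a cubext \<Rightarrow> 'a cubext" where
  "cdiv d x y = cmul d x (cinv d y)"

definition Hq :: "('a::field cubext \<times> 'a cubext) set" where
  "Hq = {((a1, a2, a3), (b1, b2, b3)). a2 * b3 - a3 * b2 \<noteq> 0}"

definition gl3_act :: "'a::field \<Rightarrow> 'a ^ 3 ^ 3 \<Rightarrow> 'a cubext \<times> 'a cubext \<Rightarrow> 'a cubext \<times> 'a cubext" where
  "gl3_act d A p = (case p of (\<alpha>, \<beta>) \<Rightarrow>
     (let den = cadd (cadd (csmul (A$3$1) \<alpha>) (csmul (A$3$2) \<beta>)) (cconst (A$3$3))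
      in (cdiv d (cadd (cadd (csmul (A$1$1) \<alpha>) (csmul (A$1$2) \<beta>)) (cconst (A$1$3))) den,
          cdiv d (cadd (cadd (csmul (A$2$1) \<alpha>) (csmul (A$2$2) \<beta>)) (cconst (A$2$3))) den)))"

definition borel3 :: "('a::field ^ 3 ^ 3) set" where
  "borel3 = {A. invertible A \<and> A$2$1 = 0 \<and> A$3$1 = 0 \<and> A$3$2 = 0}"

definition orbit :: "'a::field \<Rightarrow> ('a ^ 3 ^ 3) set \<Rightarrow> 'a cubext \<times> 'a cubext
     \<Rightarrow> ('a cubext \<times> 'a cubext) set" where
  "orbit d G p = {gl3_act d A p | A. A \<in> G}"

definition fundamental_domain ::
  "'a::field \<Rightarrow> ('a ^ 3 ^ 3) set \<Rightarrow> ('a cubext \<times> 'a cubext) set \<Rightarrow> ('a cubext \<times> 'a cubext) set \<Rightarrow> bool" where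
  "fundamental_domain d G X D \<longleftrightarrow> D \<subseteq> X \<and> (\<forall>p\<in>X. \<exists>!y. y \<in> D \<and> y \<in> orbit d G p)"

end

theory Submission
  imports Defs
begin

lemma cinv_const:
  fixes t :: "'a::field"
  assumes "t \<noteq> 0"
  shows "cinv d (t, 0, 0) = (1 / t, 0, 0)"
  unfolding cinv_def
proof (rule the_equality)
  show "cmul d (t, 0, 0) (1 / t, 0, 0) = cconst 1"
    using assms by (simp add: cmul_def cconst_def)
next
  fix z assume "cmul d (t, 0, 0) z = cconst 1"
  then show "z = (1 / t, 0, 0)" using assms
    by (cases z) (auto simp: cmul_def cconst_def field_simps)
qed

lemma act:
  fixes A :: "'a::field ^ 3 ^ 3"
  assumes "A$3$1 = 0" "A$3$2 = 0" "A$3$3 \<noteq> 0"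
  shows "gl3_act d A ((a1,a2,a3),(b1,b2,b3)) =
    (((A$1$1*a1 + A$1$2*b1 + A$1$3)/A$3$3, (A$1$1*a2+A$1$2*b2)/A$3$3, (A$1$1*a3+A$1$2*b3)/A$3$3),
     ((A$2$1*a1 + A$2$2*b1 + A$2$3)/A$3$3, (A$2$1*a2+A$2$2*b2)/A$3$3, (A$2$1*a3+A$2$2*b3)/A$3$3))"
  using assms
  by (simp add: gl3_act_def Let_def cadd_def csmul_def cconst_def cdiv_def cinv_const cmul_def
      field_simps)

lemma borel_diag:
  fixes A :: "'a::field ^ 3 ^ 3"
  assumes "A \<in> borel3"
  shows "A$3$1 = 0" "A$3$2 = 0" "A$2$1 = 0" "A$1$1 \<noteq> 0" "A$2$2 \<noteq> 0" "A$3$3 \<noteq> 0"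
proof -
  have "det A \<noteq> 0" "A$2$1 = 0" "A$3$1 = 0" "A$3$2 = 0"
    using assms invertible_det_nz by (auto simp: borel3_def)
  then show "A$3$1 = 0" "A$3$2 = 0" "A$2$1 = 0" "A$1$1 \<noteq> 0" "A$2$2 \<noteq> 0" "A$3$3 \<noteq> 0"
    by (auto simp: det_3)
qed

definition mk :: "'a::field \<Rightarrow> 'a \<Rightarrow> 'a \<Rightarrow> 'a \<Rightarrow> 'a \<Rightarrow> 'a ^ 3 ^ 3" where
  "mk a b c e f = (\<chi> i j. if i = 1 \<and> j = 1 then a else if i = 1 \<and> j = 2 then b
     else if i = 1 \<and> j = 3 then c else if i = 2 \<and> j = 2 then e
     else if i = 2 \<and> j = 3 then f else if i = 3 \<and> j = 3 then 1 else 0)"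

lemma mk_borel:
  assumes "a \<noteq> 0" "e \<noteq> 0"
  shows "mk a b c e f \<in> borel3"
proof -
  have "det (mk a b c e f) \<noteq> 0" using assms by (simp add: det_3 mk_def)
  then show ?thesis using invertible_det_nz by (auto simp: borel3_def mk_def)
qed

lemma mk_act:
  "gl3_act d (mk a b c e f) ((a1,a2,a3),(b1,b2,b3)) =
    ((a*a1 + b*b1 + c, a*a2+b*b2, a*a3+b*b3), (e*b1 + f, e*b2, e*b3))"
  by (subst act) (simp_all add: mk_def)

lemma inv_uniq: "(b::'a::field) * k1 = 1 \<Longrightarrow> b * k2 = 1 \<Longrightarrow> k1 = k2"
  by (metis mult.left_commute mult.right_neutral mult.commute)

theorem proposition5p2:
  fixes \<delta> :: "'a::{finite, field}"
  assumes "CARD('a) mod 3 = 1"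
    and "cubic_nonresidue \<delta>"
  shows "fundamental_domain \<delta> borel3 Hq
           ({((0, 1, 0), (0, v, 1)) | v. True} \<union> {((0, 0, 1), (0, 1, 0))})"
  (is "fundamental_domain _ _ _ ?D")
proof -
  have sub: "?D \<subseteq> Hq" by (auto simp: Hq_def)
  have ex: "\<exists>y. y \<in> ?D \<and> y \<in> orbit \<delta> borel3 p" if "p \<in> Hq" for p
  proof -
    obtain a1 a2 a3 b1 b2 b3 where p: "p = ((a1,a2,a3),(b1,b2,b3))" by (metis prod.exhaust)
    define D where "D = a2*b3 - a3*b2"
    have D: "D \<noteq> 0" using that by (simp add: p Hq_def D_def)
    show ?thesis
    proof (cases "b3 = 0")
      case False
      define a b e where "a = b3/D" and "b = -a3/D" and "e = 1/b3"
      define A where "A = mk a b (-(a*a1+b*b1)) e (-(e*b1))"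
      have "A \<in> borel3" unfolding A_def using False D
        by (intro mk_borel) (auto simp: a_def e_def)
      moreover have "gl3_act \<delta> A p = ((0,1,0),(0,b2/b3,1))"
      proof -
        have "a*a2 + b*b2 = (a2*b3 - a3*b2)/D"
          by (simp add: a_def b_def diff_divide_distrib add_divide_distrib mult.commute)
        then have "a*a2 + b*b2 = 1" using D by (simp add: D_def)
        moreover have "a*a3 + b*b3 = 0" using D by (simp add: a_def b_def field_simps)
        ultimately show ?thesis
          unfolding A_def p mk_act using False by (simp add: e_def field_simps)
      qed
      ultimately show ?thesis unfolding orbit_def by blast
    next
      case True
      then have "a3 \<noteq> 0" "b2 \<noteq> 0" using D by (auto simp: D_def)
      define a b e where "a = 1/a3" and "b = -a2/(a3*b2)" and "e = 1/b2"
      define A where "A = mk a b (-(a*a1+b*b1)) e (-(e*b1))"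
      have "A \<in> borel3" unfolding A_def using \<open>a3 \<noteq> 0\<close> \<open>b2 \<noteq> 0\<close>
        by (intro mk_borel) (auto simp: a_def e_def)
      moreover have "gl3_act \<delta> A p = ((0,0,1),(0,1,0))"
        unfolding A_def p mk_act using True \<open>a3 \<noteq> 0\<close> \<open>b2 \<noteq> 0\<close>
        by (simp add: a_def b_def e_def field_simps)
      ultimately show ?thesis unfolding orbit_def by blast
    qed
  qed
  have wsc: "\<exists>k. k \<noteq> 0 \<and> snd (snd y) = (k * b2, k * b3)"
    if yo: "y \<in> orbit \<delta> borel3 ((a1,a2,a3),(b1,b2,b3))" for y a1 a2 a3 b1 b2 b3
  proof -
    obtain A where A: "A \<in> borel3" "y = gl3_act \<delta> A ((a1,a2,a3),(b1,b2,b3))"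
      using yo unfolding orbit_def by blast
    note bd = borel_diag[OF A(1)]
    show ?thesis
      by (rule exI[of _ "A$2$2/A$3$3"]) (simp add: A(2) act bd)
  qed
  have uniq: "y1 = y2" if yy: "y1 \<in> ?D" "y2 \<in> ?D" "y1 \<in> orbit \<delta> borel3 p" "y2 \<in> orbit \<delta> borel3 p"
    for p y1 y2
  proof -
    obtain a1 a2 a3 b1 b2 b3 where p: "p = ((a1,a2,a3),(b1,b2,b3))" by (metis prod.exhaust)
    obtain k1 where k1: "k1 \<noteq> 0" "snd (snd y1) = (k1 * b2, k1 * b3)"
      using wsc yy(3) p by blast
    obtain k2 where k2: "k2 \<noteq> 0" "snd (snd y2) = (k2 * b2, k2 * b3)"
      using wsc yy(4) p by blast
    show ?thesis
    proof -
      have kk: "k1 = k2" if "b3 * k1 = 1" "b3 * k2 = 1"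
        using inv_uniq that by blast
      consider v1 where "y1 = ((0,1,0),(0,v1,1))" | "y1 = ((0,0,1),(0,1,0))" using yy(1) by blast
      then show ?thesis
      proof cases
        case c1: (1 v1)
        consider v2 where "y2 = ((0,1,0),(0,v2,1))" | "y2 = ((0,0,1),(0,1,0))" using yy(2) by blast
        then show ?thesis
        proof cases
          case c2: (1 v2)
          have "b3 * k1 = 1" "v1 = k1 * b2" using k1(2) c1 by (simp_all add: mult.commute)
          moreover have "b3 * k2 = 1" "v2 = k2 * b2" using k2(2) c2 by (simp_all add: mult.commute)
          ultimately show ?thesis using kk c1 c2 by simp
        next
          case 2
          have "k1 * b3 = 1" using k1(2) c1 by simp
          moreover have "k2 * b3 = 0" using k2(2) 2 by simp
          ultimately show ?thesis using k2(1) by simp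
        qed
      next
        case c1: 2
        consider v2 where "y2 = ((0,1,0),(0,v2,1))" | "y2 = ((0,0,1),(0,1,0))" using yy(2) by blast
        then show ?thesis
        proof cases
          case c2: (1 v2)
          have "k2 * b3 = 1" using k2(2) c2 by simp
          moreover have "k1 * b3 = 0" using k1(2) c1 by simp
          ultimately show ?thesis using k1(1) by simp
        next
          case 2
          then show ?thesis using c1 by simp
        qed
      qed
    qed
  qed
  show ?thesis
    unfolding fundamental_domain_def
  proof (intro conjI ballI sub)
    fix p :: "'a cubext \<times> 'a cubext" assume "p \<in> Hq"
    then obtain y where y: "y \<in> ?D" "y \<in> orbit \<delta> borel3 p" using ex by blast
    show "\<exists>!y. y \<in> ?D \<and> y \<in> orbit \<delta> borel3 p"
    proof (rule ex1I[of _ y])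
      show "y \<in> ?D \<and> y \<in> orbit \<delta> borel3 p" using y by blast
    next
      fix z assume "z \<in> ?D \<and> z \<in> orbit \<delta> borel3 p"
      then show "z = y" using uniq[of z y p] y by blast
    qed
  qed
qed

end
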